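(* Let $\mathcal{G}=\langle S,A,T,s_0,F\rangle$ be a two-player turn-based deterministic reachability game, let $Y\subseteq\mathrm{Win}_2(\mathcal{G},F)\setminus F$ and let $s\in\mathrm{Win}_2(\mathcal{G},F)\setminus F$. Then $\mathrm{DSWin}_1(\emptyset,Y)\cup\mathrm{DSWin}_1(\emptyset,\{s\})\subseteq\mathrm{DSWin}_1(\emptyset,Y\cup\{s\})$.
   Context: A two-player turn-based deterministic reachability game is a tuple $\mathcal{G}=\langle S,A,T,s_0,F\rangle$: $S$ finite, partitioned into P1 states $S_1$ and P2 states $S_2$; $A=A_1\cup A_2$ (P1 and P2 actions); $T:(S_1\times A_1)\cup(S_2\times A_2)\to S$ deterministic, possibly partial ($a$ enabled at $s$ iff $T(s,a)$ defined; every state has an enabled action); $s_0$ initial; $F\subseteq S$ a set of sink states (P2's goal). For a target $R\subseteq S$: $Z_0=R$, $Z_{k+1}=Z_k\cup\{s\in S_1:T(s,a)\in Z_k\ \forall\text{ enabled }a\}\cup\{s\in S_2:T(s,a)\in Z_k\text{ for some enabled }a\}$; $\mathrm{Win}_2(\mathcal{G},R)=\bigcup_kZ_k$; $\mathrm{rank}_{\mathcal{G},R}(s)=\min\{k:s\in Z_k\}$ ($\infty$ if none). For disjoint $X,Y\subseteq\mathrm{Win}_2(\mathcal{G},F)\setminus F$ (traps $X$, fake targets $Y$): the true game $\mathcal{G}^1_{X,Y}$ has states $S$, transitions $T_{X,Y}(q,a)=T(q,a)$ if $q\notin X\cup Y$ and $T_{X,Y}(q,a)=q$ if $q\in X\cup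 Y$; P2's perceptual game $\mathcal{G}^2_{X,Y}$ has transitions $T$ and goal $F\cup Y$, with $\mathrm{rank}_{\mathcal{G}^2_{X,Y}}:=\mathrm{rank}_{\mathcal{G},F\cup Y}$. Subjectively rationalizable actions: for $q\in S_2\cap\mathrm{Win}_2(\mathcal{G},F)\setminus(F\cup Y)$, $\mathsf{SRActs}_{X,Y}(q)=\{a\text{ enabled}:\mathrm{rank}_{\mathcal{G}^2_{X,Y}}(T(q,a))<\mathrm{rank}_{\mathcal{G}^2_{X,Y}}(q)\}$; at every other state, all enabled actions. A memoryless deterministic strategy of either player is subjectively rationalizable if it picks an action in $\mathsf{SRActs}_{X,Y}(q)$ at each of that player's states $q$. A memoryless deterministic P1 strategy $\pi_1$ is stealthy deceptive sure winning at $s$ if it is subjectively rationalizable and, for every subjectively rationalizable memoryless deterministic P2 strategy $\pi_2$, every path from $s$ generated by $(\pi_1,\pi_2)$ in the true game $\mathcal{G}^1_{X,Y}$ visits $X\cup Y$ within finitely many steps. $\mathrm{DSWin}_1(X,Y)$ is the set of states at which P1 has such a strategy. *)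

theory Defs
  imports Main "HOL-Library.Extended_Nat"
begin

record ('s, 'a) game =
  st  :: "'s set"
  st1 :: "'s set"
  st2 :: "'s set"
  act1 :: "'a set"
  act2 :: "'a set"
  trans :: "'s \<Rightarrow> 'a \<Rightarrow> 's option"
  init :: "'s"
  fin :: "'s set"

definition enabled :: "('s, 'a) game \<Rightarrow> 's \<Rightarrow> 'a \<Rightarrow> bool" where
  "enabled G s a \<longleftrightarrow> trans G s a \<noteq> None"

definition succ :: "('s, 'a) game \<Rightarrow> 's \<Rightarrow> 'a \<Rightarrow> 's" where
  "succ G s a = the (trans G s a)"

definition wf_game :: "('s, 'a) game \<Rightarrow> bool" where
  "wf_game G \<longleftrightarrow>
     finite (st G) \<and> st1 G \<inter> st2 G = {} \<and> st1 G \<union> st2 G = st G \<and>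
     init G \<in> st G \<and> fin G \<subseteq> st G \<and>
     (\<forall>s a. enabled G s a \<longrightarrow>
        s \<in> st G \<and> (s \<in> st1 G \<longrightarrow> a \<in> act1 G) \<and> (s \<in> st2 G \<longrightarrow> a \<in> act2 G)
        \<and> succ G s a \<in> st G) \<and>
     (\<forall>s \<in> st G. \<exists>a. enabled G s a) \<and>
     (\<comment> \<open>F consists of sink states\<close>
      \<forall>f \<in> fin G. \<forall>a. enabled G f a \<longrightarrow> succ G f a = f)"

primrec Z :: "('s, 'a) game \<Rightarrow> 's set \<Rightarrow> nat \<Rightarrow> 's set" where
  "Z G R 0 = R"
| "Z G R (Suc k) = Z G R k
     \<union> {s \<in> st1 G. \<forall>a. enabled G s a \<longrightarrow> succ G s a \<in> Z G R k}
     \<union> {s \<in> st2 G. \<exists>a. enabled G s a \<and> succ G s a \<in> Z G R k}"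

definition Win2 :: "('s, 'a) game \<Rightarrow> 's set \<Rightarrow> 's set" where
  "Win2 G R = (\<Union>k. Z G R k)"

definition rank :: "('s, 'a) game \<Rightarrow> 's set \<Rightarrow> 's \<Rightarrow> enat" where
  "rank G R s = (if \<exists>k. s \<in> Z G R k then enat (LEAST k. s \<in> Z G R k) else \<infinity>)"

text \<open>Subjectively rationalizable actions (P2's perceptual game has goal F \<union> Y).\<close>
definition SRActs :: "('s, 'a) game \<Rightarrow> 's set \<Rightarrow> 's set \<Rightarrow> 's \<Rightarrow> 'a set" where
  "SRActs G X Y q =
     (if q \<in> st2 G \<inter> Win2 G (fin G) - (fin G \<union> Y)
      then {a. enabled G q a \<and> rank G (fin G \<union> Y) (succ G q a) < rank G (fin G \<union> Y) q}
      else {a. enabled G q a})"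

definition SR_strategy1 :: "('s, 'a) game \<Rightarrow> 's set \<Rightarrow> 's set \<Rightarrow> ('s \<Rightarrow> 'a) \<Rightarrow> bool" where
  "SR_strategy1 G X Y \<pi> \<longleftrightarrow> (\<forall>q \<in> st1 G. \<pi> q \<in> SRActs G X Y q)"

definition SR_strategy2 :: "('s, 'a) game \<Rightarrow> 's set \<Rightarrow> 's set \<Rightarrow> ('s \<Rightarrow> 'a) \<Rightarrow> bool" where
  "SR_strategy2 G X Y \<pi> \<longleftrightarrow> (\<forall>q \<in> st2 G. \<pi> q \<in> SRActs G X Y q)"

definition true_succ :: "('s, 'a) game \<Rightarrow> 's set \<Rightarrow> 's set \<Rightarrow> 's \<Rightarrow> 'a \<Rightarrow> 's" where
  "true_succ G X Y q a = (if q \<in> X \<union> Y then q else succ G q a)"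

primrec play :: "('s, 'a) game \<Rightarrow> 's set \<Rightarrow> 's set \<Rightarrow> ('s \<Rightarrow> 'a) \<Rightarrow> ('s \<Rightarrow> 'a) \<Rightarrow> 's \<Rightarrow> nat \<Rightarrow> 's" where
  "play G X Y \<pi>1 \<pi>2 s 0 = s"
| "play G X Y \<pi>1 \<pi>2 s (Suc n) =
     (let q = play G X Y \<pi>1 \<pi>2 s n in
      true_succ G X Y q (if q \<in> st1 G then \<pi>1 q else \<pi>2 q))"

definition stealthy_deceptive_sure_winning ::
  "('s, 'a) game \<Rightarrow> 's set \<Rightarrow> 's set \<Rightarrow> ('s \<Rightarrow> 'a) \<Rightarrow> 's \<Rightarrow> bool" where
  "stealthy_deceptive_sure_winning G X Y \<pi>1 s \<longleftrightarrow>
     SR_strategy1 G X Y \<pi>1 \<and>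
     (\<forall>\<pi>2. SR_strategy2 G X Y \<pi>2 \<longrightarrow> (\<exists>n. play G X Y \<pi>1 \<pi>2 s n \<in> X \<union> Y))"

definition DSWin1 :: "('s, 'a) game \<Rightarrow> 's set \<Rightarrow> 's set \<Rightarrow> 's set" where
  "DSWin1 G X Y = {s \<in> st G. \<exists>\<pi>1. stealthy_deceptive_sure_winning G X Y \<pi>1 s}"

end

theory Submission
  imports Defs
begin

primrec Att :: "('s, 'a) game \<Rightarrow> 's set \<Rightarrow> nat \<Rightarrow> 's set" where
  "Att G Y 0 = Y"
| "Att G Y (Suc k) = Att G Y k
     \<union> {q \<in> st1 G. \<exists>a. enabled G q a \<and> succ G q a \<in> Att G Y k}
     \<union> {q \<in> st2 G. \<forall>a \<in> SRActs G {} Y q. succ G q a \<in> Att G Y k}"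

definition AttU :: "('s, 'a) game \<Rightarrow> 's set \<Rightarrow> 's set" where
  "AttU G Y = (\<Union>k. Att G Y k)"

lemma Z_mono: "k \<le> m \<Longrightarrow> Z G R k \<subseteq> Z G R m"
  by (rule lift_Suc_mono_le[where f="Z G R"]) auto

lemma Att_mono: "k \<le> m \<Longrightarrow> Att G R k \<subseteq> Att G R m"
  by (rule lift_Suc_mono_le[where f="Att G R"]) auto

lemma Z_R_mono: "R \<subseteq> R' \<Longrightarrow> Z G R k \<subseteq> Z G R' k"
  by (induction k) auto

lemma rank_le: "x \<in> Z G R k \<Longrightarrow> rank G R x \<le> enat k"
  unfolding rank_def by (auto intro: Least_le)

lemma rank_le_in: assumes "rank G R x \<le> enat k" shows "x \<in> Z G R k"
proof -
  have ex: "\<exists>k. x \<in> Z G R k" using assms unfolding rank_def by (auto split: if_splits)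
  then have r: "rank G R x = enat (LEAST k. x \<in> Z G R k)" unfolding rank_def by simp
  have "x \<in> Z G R (LEAST k. x \<in> Z G R k)" using ex by (rule LeastI_ex)
  moreover have "(LEAST k. x \<in> Z G R k) \<le> k" using assms r by simp
  ultimately show ?thesis using Z_mono[of "LEAST k. x \<in> Z G R k" k G R] by blast
qed

lemma rank_R_mono: assumes "R \<subseteq> R'" shows "rank G R' x \<le> rank G R x"
proof (cases "rank G R x")
  case (enat m)
  then have "x \<in> Z G R m" by (intro rank_le_in) simp
  then have "x \<in> Z G R' m" using Z_R_mono[OF assms] by blast
  then show ?thesis using rank_le enat by simp
qed simp

lemma enat_lt_Suc: "(a::enat) < enat (Suc k) \<Longrightarrow> a \<le> enat k"
  by (cases a) auto

lemma finite_sub_chain: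
  assumes "finite S" "S \<subseteq> (\<Union>k. f k)" "\<And>k. f k \<subseteq> f (Suc k)"
  shows "\<exists>k. S \<subseteq> (f k :: 'x set)"
  using assms(1,2)
proof (induction S rule: finite_induct)
  case empty then show ?case by simp
next
  case (insert x S)
  then obtain k where k: "S \<subseteq> f k" by auto
  from insert obtain j where j: "x \<in> f j" by auto
  have m: "\<And>a b. a \<le> b \<Longrightarrow> f a \<subseteq> f b"
    by (rule lift_Suc_mono_le[where f=f]) (use assms(3) in auto)
  have "f k \<subseteq> f (max j k)" "f j \<subseteq> f (max j k)" using m[of k "max j k"] m[of j "max j k"] by auto
  then have "insert x S \<subseteq> f (max j k)" using j k by blast
  then show ?case by blast
qed

lemma SRActs_enabled: "a \<in> SRActs G X Y q \<Longrightarrow> enabled G q a"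
  by (auto simp: SRActs_def split: if_splits)

lemma wf_succ: "wf_game G \<Longrightarrow> enabled G q a \<Longrightarrow> succ G q a \<in> st G"
  unfolding wf_game_def by blast

lemma Z_Win2:
  assumes wf: "wf_game G" and Y: "Y \<subseteq> Win2 G (fin G)"
  shows "Z G (fin G \<union> Y) k \<subseteq> Win2 G (fin G)"
proof (induction k)
  case 0
  have "fin G \<subseteq> Win2 G (fin G)" unfolding Win2_def by (intro subsetI UN_I[of 0]) auto
  then show ?case using Y by simp
next
  case (Suc k)
  have fin: "finite (st G)" using wf unfolding wf_game_def by simp
  show ?case
  proof
    fix x assume "x \<in> Z G (fin G \<union> Y) (Suc k)"
    then consider "x \<in> Z G (fin G \<union> Y) k"
      | "x \<in> st1 G" "\<forall>a. enabled G x a \<longrightarrow> succ G x a \<in> Z G (fin G \<union> Y) k"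
      | a where "x \<in> st2 G" "enabled G x a" "succ G x a \<in> Z G (fin G \<union> Y) k" by auto
    then show "x \<in> Win2 G (fin G)"
    proof cases
      case 1 then show ?thesis using Suc by blast
    next
      case 2
      let ?S = "{succ G x a |a. enabled G x a}"
      have "?S \<subseteq> st G" using wf_succ[OF wf] by blast
      then have "finite ?S" using fin finite_subset by blast
      moreover have "?S \<subseteq> (\<Union>j. Z G (fin G) j)" using 2 Suc unfolding Win2_def by blast
      ultimately obtain j where "?S \<subseteq> Z G (fin G) j"
        using finite_sub_chain[of ?S "Z G (fin G)"] by auto
      then have "x \<in> Z G (fin G) (Suc j)" using 2 by auto
      then show ?thesis unfolding Win2_def by blast
    next
      case 3
      then obtain j where "succ G x a \<in> Z G (fin G) j" using Suc unfolding Win2_def by blast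
      then have "x \<in> Z G (fin G) (Suc j)" using 3 by auto
      then show ?thesis unfolding Win2_def by blast
    qed
  qed
qed

lemma SR_nonempty:
  assumes wf: "wf_game G" and q: "q \<in> st G"
  shows "\<exists>a. a \<in> SRActs G {} Y q"
proof (cases "q \<in> st2 G \<inter> Win2 G (fin G) - (fin G \<union> Y)")
  case True
  have "Win2 G (fin G) \<subseteq> Win2 G (fin G \<union> Y)" unfolding Win2_def
    using Z_R_mono[of "fin G" "fin G \<union> Y" G] by blast
  then have ex: "\<exists>k. q \<in> Z G (fin G \<union> Y) k" using True unfolding Win2_def by blast
  define m where "m = (LEAST k. q \<in> Z G (fin G \<union> Y) k)"
  have qm: "q \<in> Z G (fin G \<union> Y) m" using ex unfolding m_def by (rule LeastI_ex)
  have rq: "rank G (fin G \<union> Y) q = enat m" unfolding rank_def m_def using ex by simp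
  have "m \<noteq> 0" by (rule notI) (use qm True in simp)
  then obtain j where j: "m = Suc j" by (cases m) auto
  have "j < m" using j by simp
  then have nj: "q \<notin> Z G (fin G \<union> Y) j"
    using not_less_Least[of j "\<lambda>k. q \<in> Z G (fin G \<union> Y) k"] unfolding m_def by blast
  have dis: "q \<notin> st1 G" using True wf unfolding wf_game_def by blast
  have "q \<in> Z G (fin G \<union> Y) j
     \<union> {s \<in> st1 G. \<forall>a. enabled G s a \<longrightarrow> succ G s a \<in> Z G (fin G \<union> Y) j}
     \<union> {s \<in> st2 G. \<exists>a. enabled G s a \<and> succ G s a \<in> Z G (fin G \<union> Y) j}"
    using qm j by (simp only: Z.simps)
  then obtain a where a: "enabled G q a" "succ G q a \<in> Z G (fin G \<union> Y) j"
    using nj dis by blast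
  have r1: "rank G (fin G \<union> Y) (succ G q a) \<le> enat j" using rank_le[OF a(2)] .
  have "enat j < rank G (fin G \<union> Y) q" using rq j by simp
  then have "rank G (fin G \<union> Y) (succ G q a) < rank G (fin G \<union> Y) q"
    using r1 by (rule le_less_trans[rotated])
  then have "a \<in> SRActs G {} Y q" unfolding SRActs_def using True a(1) by simp
  then show ?thesis by blast
next
  case False
  obtain a where "enabled G q a" using wf q unfolding wf_game_def by blast
  moreover have "SRActs G {} Y q = {a. enabled G q a}" unfolding SRActs_def by (rule if_not_P[OF False])
  ultimately have "a \<in> SRActs G {} Y q" by simp
  then show ?thesis by blast
qed

lemma E:
  assumes wf: "wf_game G" and q: "q \<in> st2 G" "q \<notin> AttU G Y2"
  shows "\<exists>b \<in> SRActs G {} Y2 q. succ G q b \<in> st G - AttU G Y2"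
proof (rule ccontr)
  assume nt: "\<not> ?thesis"
  have all: "succ G q b \<in> AttU G Y2" if b: "b \<in> SRActs G {} Y2 q" for b
  proof -
    have "succ G q b \<in> st G" using wf_succ[OF wf SRActs_enabled[OF b]] .
    then show ?thesis using nt b by blast
  qed
  let ?S = "succ G q ` SRActs G {} Y2 q"
  have "?S \<subseteq> st G"
  proof (rule image_subsetI)
    fix b assume "b \<in> SRActs G {} Y2 q"
    then show "succ G q b \<in> st G" by (rule wf_succ[OF wf SRActs_enabled])
  qed
  moreover have "finite (st G)" using wf unfolding wf_game_def by blast
  ultimately have "finite ?S" using finite_subset by blast
  moreover have "?S \<subseteq> (\<Union>k. Att G Y2 k)" using all unfolding AttU_def by blast
  ultimately obtain k where k: "?S \<subseteq> Att G Y2 k"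
    using finite_sub_chain[of ?S "Att G Y2"] by auto
  have "\<forall>a \<in> SRActs G {} Y2 q. succ G q a \<in> Att G Y2 k" using k by blast
  then have "q \<in> {q \<in> st2 G. \<forall>a \<in> SRActs G {} Y2 q. succ G q a \<in> Att G Y2 k}" using q by blast
  then have "q \<in> Att G Y2 (Suc k)" by (simp only: Att.simps) blast
  then show False using q unfolding AttU_def by blast
qed

lemma K:
  assumes wf: "wf_game G" and Y2: "Y2 \<subseteq> Win2 G (fin G)"
  shows "x \<in> st G - AttU G Y2 \<Longrightarrow> x \<in> Z G (fin G \<union> Y2) k \<Longrightarrow> x \<in> Z G (fin G) k"
proof (induction k arbitrary: x)
  case 0
  have "Y2 \<subseteq> AttU G Y2" unfolding AttU_def by (intro subsetI UN_I[of 0]) auto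
  then show ?case using 0 by auto
next
  case (Suc k)
  have Y2A: "Y2 \<subseteq> AttU G Y2" unfolding AttU_def by (intro subsetI UN_I[of 0]) auto
  from Suc.prems(2) consider "x \<in> Z G (fin G \<union> Y2) k"
      | "x \<in> st1 G" "\<forall>a. enabled G x a \<longrightarrow> succ G x a \<in> Z G (fin G \<union> Y2) k"
      | "x \<in> st2 G" by auto
  then show ?case
  proof cases
    case 1
    then have "x \<in> Z G (fin G) k" using Suc.IH Suc.prems(1) by blast
    then show ?thesis by simp
  next
    case 2
    have "succ G x a \<in> Z G (fin G) k" if en: "enabled G x a" for a
    proof -
      have s: "succ G x a \<in> st G" using wf_succ[OF wf en] .
      have "succ G x a \<notin> AttU G Y2"
      proof
        assume "succ G x a \<in> AttU G Y2"
        then obtain j where "succ G x a \<in> Att G Y2 j" unfolding AttU_def by blast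
        then have "x \<in> Att G Y2 (Suc j)" using 2 en by auto
        then show False using Suc.prems(1) unfolding AttU_def by blast
      qed
      then show ?thesis using Suc.IH s 2 en by blast
    qed
    then have "x \<in> {s \<in> st1 G. \<forall>a. enabled G s a \<longrightarrow> succ G s a \<in> Z G (fin G) k}" using 2 by blast
    then show ?thesis by simp
  next
    case 3
    show ?thesis
    proof (cases "x \<in> fin G")
      case True then show ?thesis using Z_mono[of 0 "Suc k" G "fin G"] by auto
    next
      case False
      have xn: "x \<notin> Y2" using Y2A Suc.prems(1) by blast
      have xw: "x \<in> Win2 G (fin G)" using Z_Win2[OF wf Y2] Suc.prems(2) by blast
      obtain b where b: "b \<in> SRActs G {} Y2 x" "succ G x b \<in> st G - AttU G Y2"
        using E[OF wf 3] Suc.prems(1) by blast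
      have bc: "enabled G x b" "rank G (fin G \<union> Y2) (succ G x b) < rank G (fin G \<union> Y2) x"
        using b(1) 3 xw False xn unfolding SRActs_def by auto
      have "rank G (fin G \<union> Y2) x \<le> enat (Suc k)" using rank_le[OF Suc.prems(2)] .
      then have "rank G (fin G \<union> Y2) (succ G x b) \<le> enat k"
        using bc(2) enat_lt_Suc by (meson less_le_trans)
      then have "succ G x b \<in> Z G (fin G \<union> Y2) k" by (rule rank_le_in)
      then have "succ G x b \<in> Z G (fin G) k" using Suc.IH b(2) by blast
      then have "x \<in> {s \<in> st2 G. \<exists>a. enabled G s a \<and> succ G s a \<in> Z G (fin G) k}" using 3 bc(1) by blast
      then show ?thesis by simp
    qed
  qed
qed

lemma play_shift:
  "play G X Y p1 p2 s (Suc n) = play G X Y p1 p2 (play G X Y p1 p2 s (Suc 0)) n"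
  by (induction n) (simp_all add: Let_def)

lemma P1:
  assumes wf: "wf_game G" and z: "z \<in> st G" "z \<in> AttU G Y2"
  shows "z \<in> DSWin1 G {} Y2"
proof -
  define idx where "idx q = (LEAST k. \<exists>b. enabled G q b \<and> succ G q b \<in> Att G Y2 k)" for q
  define \<sigma> where "\<sigma> q = (if \<exists>k b. enabled G q b \<and> succ G q b \<in> Att G Y2 k
      then SOME a. enabled G q a \<and> succ G q a \<in> Att G Y2 (idx q) else SOME a. enabled G q a)" for q
  have \<sigma>_good: "enabled G q (\<sigma> q) \<and> succ G q (\<sigma> q) \<in> Att G Y2 (idx q) \<and> idx q \<le> k"
    if "enabled G q b" "succ G q b \<in> Att G Y2 k" for q b k
  proof -
    have ex: "\<exists>k b. enabled G q b \<and> succ G q b \<in> Att G Y2 k" using that by blast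
    have "\<exists>b. enabled G q b \<and> succ G q b \<in> Att G Y2 (idx q)"
      unfolding idx_def by (rule LeastI_ex) (use that in blast)
    then have "enabled G q (SOME a. enabled G q a \<and> succ G q a \<in> Att G Y2 (idx q)) \<and> succ G q (SOME a. enabled G q a \<and> succ G q a \<in> Att G Y2 (idx q)) \<in> Att G Y2 (idx q)"
      by (rule someI_ex)
    moreover have "\<sigma> q = (SOME a. enabled G q a \<and> succ G q a \<in> Att G Y2 (idx q))"
      unfolding \<sigma>_def using ex by (simp only: if_True)
    ultimately have "enabled G q (\<sigma> q) \<and> succ G q (\<sigma> q) \<in> Att G Y2 (idx q)" by simp
    moreover have "idx q \<le> k" unfolding idx_def using that by (auto intro: Least_le)
    ultimately show ?thesis by blast
  qed
  have \<sigma>_en: "enabled G q (\<sigma> q)" if "q \<in> st G" for q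
  proof (cases "\<exists>k b. enabled G q b \<and> succ G q b \<in> Att G Y2 k")
    case True then show ?thesis using \<sigma>_good by blast
  next
    case False
    have "\<exists>a. enabled G q a" using wf that unfolding wf_game_def by blast
    moreover have "\<sigma> q = (SOME a. enabled G q a)" unfolding \<sigma>_def by (rule if_not_P[OF False])
    ultimately show ?thesis by (metis someI_ex)
  qed
  have SR1: "SR_strategy1 G {} Y2 \<sigma>"
    unfolding SR_strategy1_def
  proof
    fix q assume q: "q \<in> st1 G"
    then have "q \<notin> st2 G" "q \<in> st G" using wf unfolding wf_game_def by blast+
    then show "\<sigma> q \<in> SRActs G {} Y2 q" using \<sigma>_en unfolding SRActs_def by auto
  qed
  have dis: "st1 G \<inter> st2 G = {}" using wf unfolding wf_game_def by blast
  have reach: "\<forall>q. q \<in> Att G Y2 k \<longrightarrow> (\<exists>n. play G {} Y2 \<sigma> \<pi>2 q n \<in> Y2)"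
    if SR2: "SR_strategy2 G {} Y2 \<pi>2" for \<pi>2 k
  proof (induction k rule: less_induct)
    case (less k)
    show ?case
    proof (intro allI impI)
      fix q assume qk: "q \<in> Att G Y2 k"
      show "\<exists>n. play G {} Y2 \<sigma> \<pi>2 q n \<in> Y2"
      proof (cases "q \<in> Y2")
        case True then show ?thesis by (metis play.simps(1))
      next
        case qY: False
        then obtain j where j: "k = Suc j" using qk by (cases k) auto
        from qk j consider "q \<in> Att G Y2 j"
          | b where "q \<in> st1 G" "enabled G q b" "succ G q b \<in> Att G Y2 j"
          | "q \<in> st2 G" "\<forall>a \<in> SRActs G {} Y2 q. succ G q a \<in> Att G Y2 j" by auto
        then show ?thesis
        proof cases
          case 1 then show ?thesis using less j by blast
        next
          case 2
          have g: "succ G q (\<sigma> q) \<in> Att G Y2 (idx q)" "idx q < k"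
            using \<sigma>_good[OF 2(2,3)] j by auto
          have p1: "play G {} Y2 \<sigma> \<pi>2 q (Suc 0) = succ G q (\<sigma> q)"
            using 2 qY by (simp add: true_succ_def)
          obtain n where "play G {} Y2 \<sigma> \<pi>2 (succ G q (\<sigma> q)) n \<in> Y2"
            using less g by blast
          then show ?thesis using play_shift p1 by metis
        next
          case 3
          have "q \<notin> st1 G" using 3 dis by blast
          then have p1: "play G {} Y2 \<sigma> \<pi>2 q (Suc 0) = succ G q (\<pi>2 q)"
            using qY by (simp add: true_succ_def)
          have "\<pi>2 q \<in> SRActs G {} Y2 q" using SR2 3 unfolding SR_strategy2_def by blast
          then have "succ G q (\<pi>2 q) \<in> Att G Y2 j" using 3 by blast
          then obtain n where "play G {} Y2 \<sigma> \<pi>2 (succ G q (\<pi>2 q)) n \<in> Y2"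
            using less j by blast
          then show ?thesis using play_shift p1 by metis
        qed
      qed
    qed
  qed
  obtain k where zk: "z \<in> Att G Y2 k" using z unfolding AttU_def by blast
  have "stealthy_deceptive_sure_winning G {} Y2 \<sigma> z"
    unfolding stealthy_deceptive_sure_winning_def using SR1 reach zk by auto
  then show ?thesis unfolding DSWin1_def using z by blast
qed

lemma main:
  assumes wf: "wf_game G" and sub: "Y1 \<subseteq> Y2" and Y2: "Y2 \<subseteq> Win2 G (fin G)"
    and z: "z \<in> DSWin1 G {} Y1"
  shows "z \<in> DSWin1 G {} Y2"
proof -
  obtain \<pi>1 where zst: "z \<in> st G" and SR1: "SR_strategy1 G {} Y1 \<pi>1"
    and win: "\<forall>\<pi>2. SR_strategy2 G {} Y1 \<pi>2 \<longrightarrow> (\<exists>n. play G {} Y1 \<pi>1 \<pi>2 z n \<in> {} \<union> Y1)"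
    using z unfolding DSWin1_def stealthy_deceptive_sure_winning_def by blast
  have Y2A: "Y2 \<subseteq> AttU G Y2" unfolding AttU_def by (intro subsetI UN_I[of 0]) auto
  have dis: "st1 G \<inter> st2 G = {}" "st1 G \<union> st2 G = st G" using wf unfolding wf_game_def by blast+
  have "z \<in> AttU G Y2"
  proof (rule ccontr)
    assume zn: "z \<notin> AttU G Y2"
    define W where "W = st G - AttU G Y2"
    have good: "\<exists>a. a \<in> SRActs G {} Y1 q \<and> succ G q a \<in> W" if q: "q \<in> st2 G" "q \<in> W" for q
    proof -
      obtain b where b: "b \<in> SRActs G {} Y2 q" "succ G q b \<in> W"
        using E[OF wf q(1)] q(2) unfolding W_def by blast
      have qY: "q \<notin> Y2" using q Y2A unfolding W_def by blast
      have "b \<in> SRActs G {} Y1 q"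
      proof (cases "q \<in> st2 G \<inter> Win2 G (fin G) - (fin G \<union> Y2)")
        case True
        then have c1: "q \<in> st2 G \<inter> Win2 G (fin G) - (fin G \<union> Y1)" using sub by blast
        have bc: "enabled G q b" "rank G (fin G \<union> Y2) (succ G q b) < rank G (fin G \<union> Y2) q"
          using b(1) True unfolding SRActs_def by auto
        then obtain m where m: "rank G (fin G \<union> Y2) (succ G q b) = enat m"
          by (cases "rank G (fin G \<union> Y2) (succ G q b)") auto
        then have "succ G q b \<in> Z G (fin G \<union> Y2) m" by (intro rank_le_in) simp
        then have "succ G q b \<in> Z G (fin G) m" using K[OF wf Y2] b(2) unfolding W_def by blast
        then have "succ G q b \<in> Z G (fin G \<union> Y1) m" using Z_R_mono[of "fin G" "fin G \<union> Y1"] by blast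
        then have r1: "rank G (fin G \<union> Y1) (succ G q b) \<le> enat m" by (rule rank_le)
        have r2: "rank G (fin G \<union> Y2) q \<le> rank G (fin G \<union> Y1) q"
          using rank_R_mono sub by (metis Un_mono order_refl)
        have "rank G (fin G \<union> Y1) (succ G q b) < rank G (fin G \<union> Y1) q"
          using r1 r2 bc(2) m by (metis le_less_trans less_le_trans)
        then show ?thesis using c1 bc(1) unfolding SRActs_def by auto
      next
        case False
        then have "q \<notin> st2 G \<inter> Win2 G (fin G) - (fin G \<union> Y1)" using qY by blast
        then show ?thesis using False b(1) unfolding SRActs_def by auto
      qed
      then show ?thesis using b(2) by blast
    qed
    define \<pi>2 where "\<pi>2 q = (if q \<in> st2 G \<and> q \<in> W then (SOME a. a \<in> SRActs G {} Y1 q \<and> succ G q a \<in> W)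
        else (SOME a. a \<in> SRActs G {} Y1 q))" for q
    have SR2: "SR_strategy2 G {} Y1 \<pi>2"
      unfolding SR_strategy2_def
    proof
      fix q assume q: "q \<in> st2 G"
      show "\<pi>2 q \<in> SRActs G {} Y1 q"
      proof (cases "q \<in> W")
        case True then show ?thesis using someI_ex[OF good[OF q True]] q unfolding \<pi>2_def by simp
      next
        case False
        have "q \<in> st G" using q dis by blast
        then show ?thesis using someI_ex[OF SR_nonempty[OF wf, of q Y1]] False unfolding \<pi>2_def by simp
      qed
    qed
    have inv: "play G {} Y1 \<pi>1 \<pi>2 z n \<in> W" for n
    proof (induction n)
      case 0 then show ?case using zst zn unfolding W_def by simp
    next
      case (Suc n)
      define q where "q = play G {} Y1 \<pi>1 \<pi>2 z n"
      have qW: "q \<in> W" using Suc q_def by simp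
      have qY: "q \<notin> Y1" using qW sub Y2A unfolding W_def by blast
      show ?case
      proof (cases "q \<in> st1 G")
        case True
        have p: "play G {} Y1 \<pi>1 \<pi>2 z (Suc n) = succ G q (\<pi>1 q)"
          using True qY unfolding q_def by (simp add: true_succ_def Let_def)
        have "\<pi>1 q \<in> SRActs G {} Y1 q" using SR1 True unfolding SR_strategy1_def by blast
        then have en: "enabled G q (\<pi>1 q)" by (rule SRActs_enabled)
        have "succ G q (\<pi>1 q) \<notin> AttU G Y2"
        proof
          assume "succ G q (\<pi>1 q) \<in> AttU G Y2"
          then obtain j where "succ G q (\<pi>1 q) \<in> Att G Y2 j" unfolding AttU_def by blast
          then have "q \<in> Att G Y2 (Suc j)" using True en by auto
          then show False using qW unfolding W_def AttU_def by blast
        qed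
        then show ?thesis using p wf_succ[OF wf en] unfolding W_def by simp
      next
        case False
        then have q2: "q \<in> st2 G" using qW dis unfolding W_def by blast
        have p: "play G {} Y1 \<pi>1 \<pi>2 z (Suc n) = succ G q (\<pi>2 q)"
          using False qY unfolding q_def by (simp add: true_succ_def Let_def)
        have "\<pi>2 q = (SOME a. a \<in> SRActs G {} Y1 q \<and> succ G q a \<in> W)"
          using q2 qW unfolding \<pi>2_def by simp
        then have "succ G q (\<pi>2 q) \<in> W" using someI_ex[OF good[OF q2 qW]] by simp
        then show ?thesis using p by simp
      qed
    qed
    obtain n where "play G {} Y1 \<pi>1 \<pi>2 z n \<in> Y1" using win SR2 by auto
    then show False using inv[of n] sub Y2A unfolding W_def by blast
  qed
  then show ?thesis using P1[OF wf zst] by blast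
qed

theorem corollary2:
  fixes G :: "('s, 'a) game" and Y :: "'s set" and s :: 's
  assumes "wf_game G"
    and "Y \<subseteq> Win2 G (fin G) - fin G"
    and "s \<in> Win2 G (fin G) - fin G"
  shows "DSWin1 G {} Y \<union> DSWin1 G {} {s} \<subseteq> DSWin1 G {} (Y \<union> {s})"
proof -
  have Y2: "Y \<union> {s} \<subseteq> Win2 G (fin G)" using assms by blast
  show ?thesis using main[OF assms(1) _ Y2, of Y] main[OF assms(1) _ Y2, of "{s}"] by blast
qed

end
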